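(* Let $\Sigma_2=\{a,b\}$ and $\Sigma_1=\{c\}$. Then: (1) there exists an embedding from $\mathrm{sg}(\Sigma_1)\times\mathrm{sg}(\Sigma_1)$ into $\mathrm{UT}(2,\mathbb{N})$; (2) there exists an embedding from $\mathrm{fg}(\Sigma_2)\times\mathrm{fg}(\Sigma_1)$ into $\mathbb{Q}^{2\times2}$; (3) there exists an embedding from $\mathrm{sg}(\Sigma_2)\times\mathrm{fg}(\Sigma_1)$ into $\mathbb{Z}^{3\times3}$; (4) there exists an embedding from $\mathrm{fg}(\Sigma_2)\times\mathrm{sg}(\Sigma_1)$ into $\mathbb{Z}^{2\times2}$.
   Context: For an alphabet $\Sigma$, $\mathrm{sg}(\Sigma)$ is the free monoid of finite words over $\Sigma$ (including the empty word $\varepsilon$) under concatenation, and $\mathrm{fg}(\Sigma)$ is the free group on $\Sigma$ (reduced words over $\Sigma\cup\Sigma^{-1}$). Products such as $\mathrm{sg}(\Sigma_2)\times\mathrm{fg}(\Sigma_1)$ carry componentwise multiplication. For $\mathbb{K}\in\{\mathbb{N},\mathbb{Z},\mathbb{Q}\}$, $\mathbb{K}^{n\times n}$ is the multiplicative semigroup of $n\times n$ matrices with entries in $\mathbb{K}$, and $\mathrm{UT}(2,\mathbb{N})$ is the semigroup of $2\times2$ upper triangular matrices with entries in $\mathbb{N}$. An embedding is a map $\varphi$ with $\varphi(uv)=\varphi(u)\varphi(v)$ for all $u,v$ that is injective. *)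

theory Defs
  imports "HOL-Analysis.Finite_Cartesian_Product"
begin

text \<open>Alphabets: Sigma2 = {a,b}, Sigma1 = {c}.\<close>
datatype sigma2 = a | b
datatype sigma1 = c

text \<open>Free monoid sg(Sigma): all finite words (lists), multiplication = concatenation.\<close>
definition sg_carrier :: "'s list set" where "sg_carrier = UNIV"
definition sg_mult :: "'s list \<Rightarrow> 's list \<Rightarrow> 's list" where "sg_mult u v = u @ v"

text \<open>Free group fg(Sigma): letters (x, False) stand for x, (x, True) for x^{-1};
  elements are reduced words; multiplication is concatenation followed by free reduction.\<close>
fun reduced :: "('s \<times> bool) list \<Rightarrow> bool" where
  "reduced [] = True"
| "reduced [x] = True"
| "reduced (x # y # ys) = (\<not> (fst x = fst y \<and> snd x \<noteq> snd y) \<and> reduced (y # ys))"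

fun reduce :: "('s \<times> bool) list \<Rightarrow> ('s \<times> bool) list" where
  "reduce [] = []"
| "reduce (x # xs) = (case reduce xs of
      [] \<Rightarrow> [x]
    | y # ys \<Rightarrow> (if fst x = fst y \<and> snd x \<noteq> snd y then ys else x # y # ys))"

definition fg_carrier :: "('s \<times> bool) list set" where "fg_carrier = {w. reduced w}"
definition fg_mult :: "('s \<times> bool) list \<Rightarrow> ('s \<times> bool) list \<Rightarrow> ('s \<times> bool) list"
  where "fg_mult u v = reduce (u @ v)"

text \<open>Direct product with componentwise multiplication.\<close>
definition prod_mult :: "('a \<Rightarrow> 'a \<Rightarrow> 'a) \<Rightarrow> ('b \<Rightarrow> 'b \<Rightarrow> 'b) \<Rightarrow> 'a \<times> 'b \<Rightarrow> 'a \<times> 'b \<Rightarrow> 'a \<times> 'b"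
  where "prod_mult m1 m2 p q = (m1 (fst p) (fst q), m2 (snd p) (snd q))"

text \<open>Embedding of (C, m1) into the semigroup (D, m2): a multiplicative injective map C -> D.\<close>
definition embedding :: "'a set \<Rightarrow> ('a \<Rightarrow> 'a \<Rightarrow> 'a) \<Rightarrow> 'b set \<Rightarrow> ('b \<Rightarrow> 'b \<Rightarrow> 'b) \<Rightarrow> ('a \<Rightarrow> 'b) \<Rightarrow> bool"
  where "embedding C m1 D m2 \<phi> \<longleftrightarrow>
     \<phi> ` C \<subseteq> D \<and> (\<forall>u\<in>C. \<forall>v\<in>C. \<phi> (m1 u v) = m2 (\<phi> u) (\<phi> v)) \<and> inj_on \<phi> C"

text \<open>UT(2,N): 2x2 upper triangular matrices over nat (indices 0,1; entry (1,0) vanishes).\<close>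
definition UT2N :: "(nat ^ 2 ^ 2) set" where "UT2N = {M. M $ 1 $ 0 = 0}"

end

theory Submission imports Defs "HOL-Analysis.Determinants" begin

definition F :: "('m \<Rightarrow> 'm \<Rightarrow> 'm) \<Rightarrow> 'm \<Rightarrow> ('l \<Rightarrow> 'm) \<Rightarrow> 'l list \<Rightarrow> 'm"
  where "F m e f w = foldr (\<lambda>l acc. m (f l) acc) w e"

lemma F_simps[simp]: "F m e f [] = e" "F m e f (x # w) = m (f x) (F m e f w)"
  by (simp_all add: F_def)

lemma F_append:
  assumes assoc: "\<And>x y z. m (m x y) z = m x (m y z)" and lu: "\<And>x. m e x = x"
  shows "F m e f (u @ v) = m (F m e f u) (F m e f v)"
  by (induction u) (simp_all add: lu assoc)

lemma F_reduce:
  assumes assoc: "\<And>x y z. m (m x y) z = m x (m y z)" and lu: "\<And>x. m e x = x"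
    and inv: "\<And>x s. m (f (x, s)) (f (x, \<not> s)) = e"
  shows "F m e f (reduce w) = F m e f w"
proof (induction w)
  case Nil
  then show ?case by simp
next
  case (Cons x xs)
  show ?case
  proof (cases "reduce xs")
    case Nil
    then show ?thesis using Cons by simp
  next
    case (Cons y ys)
    show ?thesis
    proof (cases "fst x = fst y \<and> snd x \<noteq> snd y")
      case True
      then have y: "y = (fst x, \<not> snd x)" by (cases y) auto
      have "F m e f (x # xs) = m (f x) (F m e f (y # ys))"
        using Cons \<open>F m e f (reduce xs) = F m e f xs\<close> by simp
      also have "\<dots> = m (m (f x) (f y)) (F m e f ys)" by (simp add: assoc)
      also have "m (f x) (f y) = e" using y inv[of "fst x" "snd x"] by simp
      finally show ?thesis using Cons True lu by simp
    next
      case False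
      have "reduce (x # xs) = x # y # ys" using Cons False by simp
      then show ?thesis using Cons \<open>F m e f (reduce xs) = F m e f xs\<close> by simp
    qed
  qed
qed

definition mk2 :: "'a \<Rightarrow> 'a \<Rightarrow> 'a \<Rightarrow> 'a \<Rightarrow> 'a^2^2" where
  "mk2 p q r s = (\<chi> i j. if i = 1 then (if j = 1 then p else q) else (if j = 1 then r else s))"
definition v2 :: "'a \<Rightarrow> 'a \<Rightarrow> 'a^2" where
  "v2 x y = (\<chi> i. if i = 1 then x else y)"

lemma mk2_mult: "mk2 p q r t ** mk2 p2 q2 r2 t2 =
   mk2 (p * p2 + q * r2) (p * q2 + q * t2) (r * p2 + t * r2) (r * q2 + t * (t2::'a::semiring_1))"
  by (simp add: vec_eq_iff forall_2 mk2_def matrix_matrix_mult_def sum_2)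

lemma mk2_vec: "mk2 p q r t *v v2 x y = v2 (p * x + q * y) (r * x + t * (y::'a::semiring_1))"
  by (simp add: vec_eq_iff forall_2 mk2_def v2_def matrix_vector_mult_def sum_2)

lemma v2_nth[simp]: "v2 x y $ 1 = x" "v2 x y $ 2 = y" by (simp_all add: v2_def)
lemma mk2_nth[simp]: "mk2 p q r s $ 1 $ 1 = p" "mk2 p q r s $ 1 $ 2 = q"
  "mk2 p q r s $ 2 $ 1 = r" "mk2 p q r s $ 2 $ 2 = s" by (simp_all add: mk2_def)

lemma mat1_mk2: "(mat 1 :: 'a::zero_neq_one^2^2) = mk2 1 0 0 1"
  by (simp add: vec_eq_iff forall_2 mk2_def mat_def)

fun L :: "sigma2 \<times> bool \<Rightarrow> int^2^2" where
  "L (a, s) = mk2 1 (if s then -3 else 3) 0 1"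
| "L (b, s) = mk2 1 0 (if s then -3 else 3) 1"

lemma L_inv: "L (x, s) ** L (x, \<not> s) = mat 1"
  by (cases x) (auto simp: mk2_mult mat1_mk2)

definition M :: "(sigma2 \<times> bool) list \<Rightarrow> int^2^2" where
  "M = F (**) (mat 1) L"

lemma M_append: "M (u @ v) = M u ** M v"
  unfolding M_def by (rule F_append) (simp_all add: matrix_mul_assoc)

lemma M_reduce: "M (reduce w) = M w"
  unfolding M_def by (rule F_reduce) (simp_all add: matrix_mul_assoc L_inv)

fun R :: "sigma2 \<times> bool \<Rightarrow> int^2 \<Rightarrow> bool" where
  "R (a, s) v = (\<bar>v$1\<bar> > \<bar>v$2\<bar> \<and> (if s then v$1 * v$2 < 0 else v$1 * v$2 > 0))"
| "R (b, s) v = (\<bar>v$2\<bar> > \<bar>v$1\<bar> \<and> (if s then v$1 * v$2 < 0 else v$1 * v$2 > 0))"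

lemma R_step:
  assumes "R y (v2 p q)" "\<not> (fst x = fst y \<and> snd x \<noteq> snd y)"
  shows "R x (L x *v v2 p q)"
  using assms
  by (cases x; cases y; cases "fst x"; cases "fst y")
     (auto simp: mk2_vec zero_less_mult_iff mult_less_0_iff abs_if split: if_splits)

lemma R_base: "R x (L x *v v2 1 1)"
  by (cases x; cases "fst x") (auto simp: mk2_vec)

lemma v2_eta: "v = v2 (v$1) (v$2)"
  by (simp add: vec_eq_iff forall_2)

lemma R_main: "reduced (x # w) \<Longrightarrow> R x (M (x # w) *v v2 1 1)"
proof (induction w arbitrary: x)
  case Nil
  then show ?case by (simp add: M_def R_base)
next
  case (Cons y w)
  then have r: "reduced (y # w)" and nc: "\<not> (fst x = fst y \<and> snd x \<noteq> snd y)" by auto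
  have "M (x # y # w) *v v2 1 1 = L x *v (M (y # w) *v v2 1 1)"
    by (simp add: M_def matrix_vector_mul_assoc)
  moreover have "R y (v2 ((M (y # w) *v v2 1 1)$1) ((M (y # w) *v v2 1 1)$2))"
    using Cons.IH[OF r] v2_eta by metis
  ultimately show ?case using R_step nc v2_eta by metis
qed

lemma R_disj: "R x v \<Longrightarrow> R y v \<Longrightarrow> x = y"
  by (cases x; cases y; cases "fst x"; cases "fst y") (auto split: if_splits)

lemma R_p0: "\<not> R x (v2 1 1)"
  by (cases x; cases "fst x") auto

lemma reduced_tl: "reduced (x # w) \<Longrightarrow> reduced w"
  by (cases w) auto

lemma M_inj: "reduced u \<Longrightarrow> reduced v \<Longrightarrow> M u = M v \<Longrightarrow> u = v"
proof (induction u arbitrary: v)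
  case Nil
  then show ?case
    using R_main[of "hd v" "tl v"] R_p0 by (cases v) (auto simp: M_def)
next
  case (Cons x u)
  show ?case
  proof (cases v)
    case Nil
    then show ?thesis using Cons.prems R_main[of x u] R_p0 by (auto simp: M_def)
  next
    case (Cons y v')
    show ?thesis
    proof (cases "x = y")
      case True
      have "L (fst x, \<not> snd x) ** (L x ** M u) = L (fst x, \<not> snd x) ** (L x ** M v')"
        using Cons.prems \<open>v = y # v'\<close> True by (simp add: M_def)
      then have "M u = M v'"
        using L_inv[of "fst x" "\<not> snd x"] by (simp add: matrix_mul_assoc)
      then show ?thesis using Cons.IH[of v'] Cons.prems \<open>v = y # v'\<close> True reduced_tl by blast
    next
      case False
      then show ?thesis using Cons.prems \<open>v = y # v'\<close> R_main[of x u] R_main[of y v'] R_disj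
        by metis
    qed
  qed
qed

lemma sig1[simp]: "(x::sigma1) = y" by (cases x; cases y) simp

definition cnt :: "(sigma1 \<times> bool) list \<Rightarrow> int" where
  "cnt = F (+) 0 (\<lambda>l. if snd l then -1 else 1)"

lemma cnt_append: "cnt (u @ v) = cnt u + cnt v"
  unfolding cnt_def by (rule F_append) simp_all

lemma cnt_reduce: "cnt (reduce w) = cnt w"
  unfolding cnt_def by (rule F_reduce) simp_all

lemma reduced1: "reduced (w :: (sigma1 \<times> bool) list) \<Longrightarrow> w = replicate (length w) (c, snd (hd w))"
proof (induction w)
  case Nil
  then show ?case by simp
next
  case (Cons x ys)
  show ?case
  proof (cases ys)
    case Nil
    then show ?thesis by (cases x) (simp add: sigma1.exhaust)
  next
    case (Cons y ys')
    have "snd x = snd y" using Cons.prems Cons by (simp add: sigma1.exhaust)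
    moreover have "ys = replicate (length ys) (c, snd y)"
      using Cons.IH Cons.prems reduced_tl Cons by fastforce
    ultimately show ?thesis using Cons by (cases x; cases y) auto
  qed
qed

lemma cnt_rep: "cnt (replicate n (c, s)) = (if s then - int n else int n)"
  by (induction n) (auto simp: cnt_def)

lemma cnt_inj:
  assumes "reduced u" "reduced v" "cnt u = cnt v" shows "u = v"
proof -
  have u: "u = replicate (length u) (c, snd (hd u))" by (rule reduced1[OF assms(1)])
  have v: "v = replicate (length v) (c, snd (hd v))" by (rule reduced1[OF assms(2)])
  have e: "cnt (replicate (length u) (c, snd (hd u))) = cnt (replicate (length v) (c, snd (hd v)))"
    using assms(3) u v by simp
  show ?thesis
  proof (cases "length u = 0 \<or> length v = 0")
    case True
    then show ?thesis using e by (auto simp: cnt_rep split: if_splits)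
  next
    case False
    then have lu: "int (length u) > 0" "int (length v) > 0" by auto
    have "length u = length v \<and> snd (hd u) = snd (hd v)"
    proof (cases "snd (hd u)"; cases "snd (hd v)")
    qed (use e lu in \<open>simp_all add: cnt_rep\<close>)
    then have "replicate (length u) (c, snd (hd u)) = replicate (length v) (c, snd (hd v))"
      by simp
    then show ?thesis using u v by simp
  qed
qed

lemma len1_inj: "length (u :: sigma1 list) = length v \<Longrightarrow> u = v"
proof (induction u arbitrary: v)
  case Nil then show ?case by simp
next
  case (Cons x u) then show ?case by (cases v) (auto simp: sigma1.exhaust)
qed

fun N :: "sigma2 list \<Rightarrow> int" where
  "N [] = 0"
| "N (x # w) = (if x = a then 0 else 1) + 2 * N w"

lemma N_append: "N (u @ v) = N u + 2 ^ length u * N v"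
  by (induction u) (auto simp: algebra_simps)

lemma N_inj: "length u = length v \<Longrightarrow> N u = N v \<Longrightarrow> u = v"
proof (induction u arbitrary: v)
  case Nil then show ?case by simp
next
  case (Cons x u)
  then obtain y v' where v: "v = y # v'" by (cases v) auto
  have h: "(if x = a then 0 else 1) + 2 * N u = (if y = a then 0 else (1::int)) + 2 * N v'"
    using Cons.prems v by simp
  have "x = y \<and> N u = N v'"
  proof (cases x; cases y)
    assume "x = a" "y = b" then show ?thesis using h by simp presburger
  next
    assume "x = b" "y = a" then show ?thesis using h by simp presburger
  qed (use h in simp_all)
  then show ?case using Cons v by auto
qed

definition sc :: "'a::comm_ring_1 \<Rightarrow> int^2^2 \<Rightarrow> 'a^2^2" where
  "sc \<alpha> A = (\<chi> i j. \<alpha> * of_int (A$i$j))"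

lemma sc_mult: "sc \<alpha> A ** sc \<beta> B = sc (\<alpha> * \<beta>) (A ** B)"
  by (simp add: vec_eq_iff sc_def matrix_matrix_mult_def sum_2 algebra_simps)

lemma det_L: "det (L x) = 1"
  by (cases x; cases "fst x") (auto simp: det_2)

lemma det_M: "det (M u) = 1"
  by (induction u) (simp_all add: M_def det_mul det_L)

lemma sc_inj:
  fixes \<alpha> \<beta> :: "'a::linordered_idom"
  assumes "sc \<alpha> A = sc \<beta> B" "det A = 1" "det B = 1" "\<alpha> > 0" "\<beta> > 0"
  shows "\<alpha> = \<beta> \<and> A = B"
proof -
  have e: "\<And>i j. \<alpha> * of_int (A$i$j) = \<beta> * of_int (B$i$j)"
    using assms(1) by (simp add: sc_def vec_eq_iff)
  have "of_int (det A) * \<alpha>^2 = of_int (det B) * \<beta>^2"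
  proof -
    have "of_int (det A) * \<alpha>^2 = (\<alpha> * of_int (A$1$1)) * (\<alpha> * of_int (A$2$2)) - (\<alpha> * of_int (A$1$2)) * (\<alpha> * of_int (A$2$1))"
      by (simp add: det_2 power2_eq_square algebra_simps)
    also have "\<dots> = (\<beta> * of_int (B$1$1)) * (\<beta> * of_int (B$2$2)) - (\<beta> * of_int (B$1$2)) * (\<beta> * of_int (B$2$1))"
      by (simp only: e)
    also have "\<dots> = of_int (det B) * \<beta>^2"
      by (simp add: det_2 power2_eq_square algebra_simps)
    finally show ?thesis .
  qed
  then have "\<alpha>^2 = \<beta>^2" using assms(2,3) by simp
  then have ab: "\<alpha> = \<beta>" using assms(4,5) by (simp add: power2_eq_iff_nonneg)
  then have "A = B" using e assms(5) by (simp add: vec_eq_iff)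
  then show ?thesis using ab by simp
qed

definition T :: "int \<Rightarrow> int \<Rightarrow> int \<Rightarrow> int^3^3" where
  "T p q k = (\<chi> i j. if i = 1 then (if j = 1 then p else if j = 2 then q else 0)
     else if i = 2 then (if j = 2 then 1 else 0) else (if j = 2 then k else if j = 3 then 1 else 0))"

lemma T_mult: "T p q k ** T p2 q2 k2 = T (p * p2) (p * q2 + q) (k + k2)"
  by (simp add: vec_eq_iff forall_3 T_def matrix_matrix_mult_def sum_3)

lemma T_inj: "T p q k = T p2 q2 k2 \<Longrightarrow> p = p2 \<and> q = q2 \<and> k = k2"
  unfolding T_def vec_eq_iff forall_3 by simp

definition D :: "nat \<Rightarrow> nat \<Rightarrow> nat^2^2" where
  "D p q = (\<chi> i j. if i = j then (if i = 1 then p else q) else 0)"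

lemma D_mult: "D p q ** D p2 q2 = D (p * p2) (q * q2)"
  by (simp add: vec_eq_iff forall_2 D_def matrix_matrix_mult_def sum_2)

lemma part1: "\<exists>\<phi> :: sigma1 list \<times> sigma1 list \<Rightarrow> nat ^ 2 ^ 2.
            embedding (sg_carrier \<times> sg_carrier) (prod_mult sg_mult sg_mult) UT2N (**) \<phi>"
proof (intro exI)
  let ?\<phi> = "\<lambda>p :: sigma1 list \<times> sigma1 list. D (2 ^ length (fst p)) (2 ^ length (snd p))"
  show "embedding (sg_carrier \<times> sg_carrier) (prod_mult sg_mult sg_mult) UT2N (**) ?\<phi>"
    unfolding embedding_def
  proof (intro conjI ballI)
    show "?\<phi> ` (sg_carrier \<times> sg_carrier) \<subseteq> UT2N" by (auto simp: UT2N_def D_def)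
  next
    fix u v :: "sigma1 list \<times> sigma1 list" assume "u \<in> sg_carrier \<times> sg_carrier" "v \<in> sg_carrier \<times> sg_carrier"
    show "?\<phi> (prod_mult sg_mult sg_mult u v) = ?\<phi> u ** ?\<phi> v"
      by (simp add: prod_mult_def sg_mult_def D_mult power_add)
  next
    show "inj_on ?\<phi> (sg_carrier \<times> sg_carrier)"
    proof (rule inj_onI)
      fix u v :: "sigma1 list \<times> sigma1 list" assume "?\<phi> u = ?\<phi> v"
      then have "?\<phi> u $ 1 $ 1 = ?\<phi> v $ 1 $ 1" "?\<phi> u $ 2 $ 2 = ?\<phi> v $ 2 $ 2" by simp_all
      then have "length (fst u) = length (fst v)" "length (snd u) = length (snd v)"
        by (simp_all add: D_def)
      then show "u = v" using len1_inj by (metis prod.expand)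
    qed
  qed
qed

lemma part2: "\<exists>\<phi> :: (sigma2 \<times> bool) list \<times> (sigma1 \<times> bool) list \<Rightarrow> rat ^ 2 ^ 2.
            embedding (fg_carrier \<times> fg_carrier) (prod_mult fg_mult fg_mult) UNIV (**) \<phi>"
proof (intro exI)
  let ?\<phi> = "\<lambda>p :: (sigma2 \<times> bool) list \<times> (sigma1 \<times> bool) list. sc ((2::rat) powi cnt (snd p)) (M (fst p))"
  show "embedding (fg_carrier \<times> fg_carrier) (prod_mult fg_mult fg_mult) UNIV (**) ?\<phi>"
    unfolding embedding_def
  proof (intro conjI ballI)
    show "?\<phi> ` (fg_carrier \<times> fg_carrier) \<subseteq> UNIV" by simp
  next
    fix u v :: "(sigma2 \<times> bool) list \<times> (sigma1 \<times> bool) list" assume "u \<in> fg_carrier \<times> fg_carrier" "v \<in> fg_carrier \<times> fg_carrier"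
    show "?\<phi> (prod_mult fg_mult fg_mult u v) = ?\<phi> u ** ?\<phi> v"
      by (simp add: prod_mult_def fg_mult_def sc_mult M_reduce M_append cnt_reduce cnt_append power_int_add)
  next
    show "inj_on ?\<phi> (fg_carrier \<times> fg_carrier)"
    proof (rule inj_onI)
      fix u v :: "(sigma2 \<times> bool) list \<times> (sigma1 \<times> bool) list"
      assume uv: "u \<in> fg_carrier \<times> fg_carrier" "v \<in> fg_carrier \<times> fg_carrier" and e: "?\<phi> u = ?\<phi> v"
      have "(2::rat) powi cnt (snd u) = 2 powi cnt (snd v) \<and> M (fst u) = M (fst v)"
        by (rule sc_inj[OF e det_M det_M]) simp_all
      moreover have "cnt (snd u) = cnt (snd v)"
      proof (rule ccontr)
        assume "cnt (snd u) \<noteq> cnt (snd v)"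
        then have "(2::rat) powi cnt (snd u) \<noteq> 2 powi cnt (snd v)"
          by (metis linorder_neqE power_int_strict_increasing one_less_numeral_iff semiring_norm(76) less_irrefl)
        with calculation show False by simp
      qed
      ultimately show "u = v" using uv M_inj cnt_inj
        by (metis fg_carrier_def mem_Collect_eq mem_Times_iff prod.expand)
    qed
  qed
qed

lemma part3: "\<exists>\<phi> :: sigma2 list \<times> (sigma1 \<times> bool) list \<Rightarrow> int ^ 3 ^ 3.
            embedding (sg_carrier \<times> fg_carrier) (prod_mult sg_mult fg_mult) UNIV (**) \<phi>"
proof (intro exI)
  let ?\<phi> = "\<lambda>p :: sigma2 list \<times> (sigma1 \<times> bool) list. T (2 ^ length (fst p)) (N (fst p)) (cnt (snd p))"
  show "embedding (sg_carrier \<times> fg_carrier) (prod_mult sg_mult fg_mult) UNIV (**) ?\<phi>"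
    unfolding embedding_def
  proof (intro conjI ballI)
    show "?\<phi> ` (sg_carrier \<times> fg_carrier) \<subseteq> UNIV" by simp
  next
    fix u v :: "sigma2 list \<times> (sigma1 \<times> bool) list" assume "u \<in> sg_carrier \<times> fg_carrier" "v \<in> sg_carrier \<times> fg_carrier"
    show "?\<phi> (prod_mult sg_mult fg_mult u v) = ?\<phi> u ** ?\<phi> v"
      by (simp add: prod_mult_def fg_mult_def sg_mult_def T_mult N_append cnt_reduce cnt_append power_add add.commute)
  next
    show "inj_on ?\<phi> (sg_carrier \<times> fg_carrier)"
    proof (rule inj_onI)
      fix u v :: "sigma2 list \<times> (sigma1 \<times> bool) list"
      assume uv: "u \<in> sg_carrier \<times> fg_carrier" "v \<in> sg_carrier \<times> fg_carrier" and e: "?\<phi> u = ?\<phi> v"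
      from T_inj[OF e] have h: "(2::int) ^ length (fst u) = 2 ^ length (fst v)" "N (fst u) = N (fst v)"
        "cnt (snd u) = cnt (snd v)" by auto
      from h(1) have "length (fst u) = length (fst v)" by (simp add: power_inject_exp)
      then show "u = v" using uv h N_inj cnt_inj
        by (metis fg_carrier_def mem_Collect_eq mem_Times_iff prod.expand)
    qed
  qed
qed

lemma part4: "\<exists>\<phi> :: (sigma2 \<times> bool) list \<times> sigma1 list \<Rightarrow> int ^ 2 ^ 2.
            embedding (fg_carrier \<times> sg_carrier) (prod_mult fg_mult sg_mult) UNIV (**) \<phi>"
proof (intro exI)
  let ?\<phi> = "\<lambda>p :: (sigma2 \<times> bool) list \<times> sigma1 list. sc ((2::int) ^ length (snd p)) (M (fst p))"
  show "embedding (fg_carrier \<times> sg_carrier) (prod_mult fg_mult sg_mult) UNIV (**) ?\<phi>"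
    unfolding embedding_def
  proof (intro conjI ballI)
    show "?\<phi> ` (fg_carrier \<times> sg_carrier) \<subseteq> UNIV" by simp
  next
    fix u v :: "(sigma2 \<times> bool) list \<times> sigma1 list" assume "u \<in> fg_carrier \<times> sg_carrier" "v \<in> fg_carrier \<times> sg_carrier"
    show "?\<phi> (prod_mult fg_mult sg_mult u v) = ?\<phi> u ** ?\<phi> v"
      by (simp add: prod_mult_def fg_mult_def sg_mult_def sc_mult M_reduce M_append power_add)
  next
    show "inj_on ?\<phi> (fg_carrier \<times> sg_carrier)"
    proof (rule inj_onI)
      fix u v :: "(sigma2 \<times> bool) list \<times> sigma1 list"
      assume uv: "u \<in> fg_carrier \<times> sg_carrier" "v \<in> fg_carrier \<times> sg_carrier" and e: "?\<phi> u = ?\<phi> v"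
      have h: "(2::int) ^ length (snd u) = 2 ^ length (snd v) \<and> M (fst u) = M (fst v)"
        by (rule sc_inj[OF e det_M det_M]) simp_all
      then have "length (snd u) = length (snd v)" by (simp add: power_inject_exp)
      then show "u = v" using uv h M_inj len1_inj
        by (metis fg_carrier_def mem_Collect_eq mem_Times_iff prod.expand)
    qed
  qed
qed

theorem proposition5:
  shows "(\<exists>\<phi> :: sigma1 list \<times> sigma1 list \<Rightarrow> nat ^ 2 ^ 2.
            embedding (sg_carrier \<times> sg_carrier) (prod_mult sg_mult sg_mult) UT2N (**) \<phi>)
       \<and> (\<exists>\<phi> :: (sigma2 \<times> bool) list \<times> (sigma1 \<times> bool) list \<Rightarrow> rat ^ 2 ^ 2.
            embedding (fg_carrier \<times> fg_carrier) (prod_mult fg_mult fg_mult) UNIV (**) \<phi>)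
       \<and> (\<exists>\<phi> :: sigma2 list \<times> (sigma1 \<times> bool) list \<Rightarrow> int ^ 3 ^ 3.
            embedding (sg_carrier \<times> fg_carrier) (prod_mult sg_mult fg_mult) UNIV (**) \<phi>)
       \<and> (\<exists>\<phi> :: (sigma2 \<times> bool) list \<times> sigma1 list \<Rightarrow> int ^ 2 ^ 2.
            embedding (fg_carrier \<times> sg_carrier) (prod_mult fg_mult sg_mult) UNIV (**) \<phi>)"
  using part1 part2 part3 part4 by blast

end
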